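(* Let $F\in\mathbb{R}[x]$ be non-constant, $s\ge5$ an integer, $\alpha,\beta\in\mathbb{R}$ with $\alpha\ne0$, and $Q=F\circ T_s\circ(\alpha x+\beta)$, with $n=\deg Q$. 1) If $Ch_2(Q)=Ch_3(Q)=0$, then either $\alpha=\pm1$ and $\beta=0$, or $$4\beta^2=\frac{6}{(n-1)(2n-1)},\qquad \alpha^2=\frac{2n-4}{2n-1}.$$ 2) If $Ch_2(Q)=Ch_4(Q)=0$, then either $\alpha=\pm1$ and $\beta=0$, or $$4\beta^2=\frac{12}{(n-1)(2n-1)},\qquad \alpha^2=\frac{2n-7}{2n-1}.$$ In particular, in both cases, unless $\alpha=\pm1$ and $\beta=0$, one has $\alpha^2<1$ and $\beta\ne0$.
   Context: $T_k$ denotes the Chebyshev polynomial of the first kind of degree $k$, $T_k(\cos\phi)=\cos(k\phi)$. Every real polynomial $Q$ of degree $n$ can be uniquely written as $Q=\sum_{k=0}^n d_kT_k$ with $d_k\in\mathbb{R}$; set $Ch_i(Q)=d_{n-i}$ for $0\le i\le n$. $\circ$ denotes composition. *)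

theory Defs
  imports "HOL-Computational_Algebra.Polynomial" Complex_Main
begin

fun cheb :: "nat \<Rightarrow> real poly" where
  "cheb 0 = 1"
| "cheb (Suc 0) = [:0, 1:]"
| "cheb (Suc (Suc k)) = [:0, 2:] * cheb (Suc k) - cheb k"

definition cheb_coeffs :: "real poly \<Rightarrow> nat \<Rightarrow> real" where
  "cheb_coeffs Q = (THE d. (\<forall>k>degree Q. d k = 0) \<and>
                          Q = (\<Sum>k\<le>degree Q. smult (d k) (cheb k)))"

definition Ch :: "nat \<Rightarrow> real poly \<Rightarrow> real" where
  "Ch i Q = cheb_coeffs Q (degree Q - i)"

end

theory Submission imports Defs begin

lemma cheb_rec_coeff:
  "coeff (cheb (Suc (Suc k))) (Suc j) = 2 * coeff (cheb (Suc k)) j - coeff (cheb k) (Suc j)"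
  "coeff (cheb (Suc (Suc k))) 0 = - coeff (cheb k) 0"
  by (simp_all add: coeff_pCons mult.commute[of _ "cheb _"] )

lemma cheb_degree_lead: "degree (cheb k) = k \<and> coeff (cheb k) k = (if k = 0 then 1 else 2^(k-1))"
proof (induction k rule: cheb.induct)
  case 1 then show ?case by simp
next
  case 2 then show ?case by simp
next
  case (3 k)
  have d1: "degree ([:0,2:] * cheb (Suc k)) = Suc (Suc k)"
  proof -
    have "cheb (Suc k) \<noteq> 0" using 3 by (metis degree_0 nat.distinct(1))
    then show ?thesis using 3 by (simp add: degree_mult_eq)
  qed
  have c1: "coeff ([:0,2:] * cheb (Suc k)) (Suc (Suc k)) = 2^(Suc k)"
    using 3 by (simp add: coeff_pCons)
  have "degree (cheb k) < Suc (Suc k)" using 3 by simp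
  then have dd: "degree ([:0,2:] * cheb (Suc k) - cheb k) = Suc (Suc k)"
    using d1 degree_add_eq_left[of "- cheb k" "[:0,2:] * cheb (Suc k)"] by simp
  have "coeff (cheb k) (Suc (Suc k)) = 0" using 3 by (simp add: coeff_eq_0)
  then show ?case using dd c1 by simp
qed

lemma cheb_degree[simp]: "degree (cheb k) = k" using cheb_degree_lead by blast

lemma cheb_lead: "coeff (cheb (Suc k)) (Suc k) = 2^k" using cheb_degree_lead[of "Suc k"] by simp

lemma cheb_parity: "odd (k + j) \<Longrightarrow> coeff (cheb k) j = 0"
proof (induction k arbitrary: j rule: cheb.induct)
  case 1 then show ?case by (cases j) auto
next
  case 2 then show ?case by (cases j) (auto simp: coeff_pCons odd_pos split: nat.splits)
next
  case (3 k)
  show ?case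
  proof (cases j)
    case 0 then show ?thesis using 3 by (simp add: cheb_rec_coeff)
  next
    case (Suc i) then show ?thesis using 3 by (simp add: cheb_rec_coeff)
  qed
qed

lemma cheb_sub2: "coeff (cheb (k+2)) k = - real (k+2) * 2^k / 2"
proof (induction k rule: less_induct)
  case (less k)
  show ?case
  proof (cases k)
    case 0 then show ?thesis by (simp add: numeral_2_eq_2)
  next
    case (Suc i)
    show ?thesis
    proof (cases i)
      case 0 then show ?thesis using Suc by (simp add: numeral_3_eq_3 numeral_2_eq_2 coeff_pCons)
    next
      case (Suc j)
      have "coeff (cheb (k+2)) k = 2 * coeff (cheb (j+3)) (j+1) - coeff (cheb (j+2)) (j+2)"
        using \<open>k = Suc i\<close> Suc cheb_rec_coeff(1)[of "j+2" "j+1"] by (simp add: numeral_3_eq_3 numeral_2_eq_2)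
      also have "coeff (cheb (j+3)) (j+1) = - real (j+3) * 2^(j+1) / 2"
        using less[of "j+1"] \<open>k = Suc i\<close> Suc by (simp add: numeral_3_eq_3 numeral_2_eq_2)
      also have "coeff (cheb (j+2)) (j+2) = 2^(j+1)"
        using cheb_lead[of "j+1"] by (simp add: numeral_2_eq_2)
      finally show ?thesis using \<open>k = Suc i\<close> Suc by (simp add: field_simps)
    qed
  qed
qed

lemma cheb_sub4: "coeff (cheb (k+4)) k = real (k+4) * real (k+1) * 2^k / 4"
proof (induction k rule: less_induct)
  case (less k)
  show ?case
  proof (cases k)
    case 0 then show ?thesis by (simp add: eval_nat_numeral coeff_pCons)
  next
    case (Suc i)
    show ?thesis
    proof (cases i)
      case 0 then show ?thesis using Suc by (simp add: eval_nat_numeral coeff_pCons)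
    next
      case (Suc j)
      have "coeff (cheb (k+4)) k = 2 * coeff (cheb (j+5)) (j+1) - coeff (cheb (j+4)) (j+2)"
        using \<open>k = Suc i\<close> Suc cheb_rec_coeff(1)[of "j+4" "j+1"] by (simp add: eval_nat_numeral)
      also have "coeff (cheb (j+5)) (j+1) = real (j+5) * real (j+2) * 2^(j+1) / 4"
        using less[of "j+1"] \<open>k = Suc i\<close> Suc by (simp add: eval_nat_numeral)
      also have "coeff (cheb (j+4)) (j+2) = - real (j+4) * 2^(j+2) / 2"
        using cheb_sub2[of "j+2"] by (simp add: eval_nat_numeral)
      finally show ?thesis using \<open>k = Suc i\<close> Suc by (simp add: field_simps)
    qed
  qed
qed

lemma sum_extend_zero:
  fixes N M :: nat
  assumes "\<forall>k>N. f k = 0" "N \<le> M"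
  shows "(\<Sum>k\<le>M. f k) = (\<Sum>k\<le>N. f k)"
proof (rule sum.mono_neutral_right)
  show "finite {..M}" by simp
  show "{..N} \<subseteq> {..M}" using assms by auto
  show "\<forall>i\<in>{..M} - {..N}. f i = 0" using assms by auto
qed

lemma cheb_exp_exists:
  "\<exists>d. (\<forall>k>degree Q. d k = 0) \<and> Q = (\<Sum>k\<le>degree Q. smult (d k) (cheb k))"
proof (induction "degree Q" arbitrary: Q rule: less_induct)
  case less
  show ?case
  proof (cases "degree Q = 0")
    case True
    then obtain c where Qc: "Q = [:c:]" by (metis degree_eq_zeroE)
    show ?thesis
      by (rule exI[of _ "\<lambda>k. if k = 0 then c else 0"]) (simp add: True Qc)
  next
    case False
    define m where "m = degree Q"
    define c where "c = coeff Q m / 2^(m-1)"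
    define Q' where "Q' = Q - smult c (cheb m)"
    have cm: "coeff (cheb m) m = 2^(m-1)" using False cheb_degree_lead[of m] m_def by simp
    have "coeff Q' m = 0" using cm by (simp add: Q'_def c_def)
    moreover have "degree Q' \<le> m" unfolding Q'_def m_def
      by (rule degree_diff_le) (auto intro: order.trans[OF degree_smult_le])
    ultimately have dQ': "degree Q' < m"
      using False m_def by (metis antisym_conv1 degree_0 leading_coeff_0_iff)
    then obtain d' where d': "\<forall>k>degree Q'. d' k = 0" "Q' = (\<Sum>k\<le>degree Q'. smult (d' k) (cheb k))"
      using less m_def by blast
    define d where "d = d'(m := c)"
    have s1: "(\<Sum>k\<le>m. smult (d k) (cheb k)) = (\<Sum>k<m. smult (d' k) (cheb k)) + smult c (cheb m)"
      by (simp add: lessThan_Suc_atMost[symmetric] d_def)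
    have s2: "(\<Sum>k<m. smult (d' k) (cheb k)) = (\<Sum>k\<le>degree Q'. smult (d' k) (cheb k))"
    proof -
      have "(\<Sum>k<m. smult (d' k) (cheb k)) = (\<Sum>k\<le>m - 1. smult (d' k) (cheb k))"
        using False m_def by (metis Suc_diff_1 bot_nat_0.not_eq_extremum lessThan_Suc_atMost)
      also have "\<dots> = (\<Sum>k\<le>degree Q'. smult (d' k) (cheb k))"
        by (rule sum_extend_zero) (use d' dQ' in auto)
      finally show ?thesis .
    qed
    show ?thesis
    proof (rule exI[of _ d], intro conjI)
      show "\<forall>k>degree Q. d k = 0" using d' dQ' m_def by (auto simp: d_def)
      show "Q = (\<Sum>k\<le>degree Q. smult (d k) (cheb k))"
        using s1 s2 d' m_def by (simp add: Q'_def)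
    qed
  qed
qed

lemma cheb_indep: "(\<Sum>k\<le>N. smult (f k) (cheb k)) = 0 \<Longrightarrow> k \<le> N \<Longrightarrow> f k = 0"
proof (induction N arbitrary: k)
  case 0 then show ?case by simp
next
  case (Suc N)
  have "coeff (\<Sum>k\<le>Suc N. smult (f k) (cheb k)) (Suc N) = f (Suc N) * 2^N"
  proof -
    have "coeff (\<Sum>k\<le>Suc N. smult (f k) (cheb k)) (Suc N)
        = (\<Sum>k\<le>N. f k * coeff (cheb k) (Suc N)) + f (Suc N) * coeff (cheb (Suc N)) (Suc N)"
      by (simp add: coeff_sum)
    also have "(\<Sum>k\<le>N. f k * coeff (cheb k) (Suc N)) = 0"
      by (rule sum.neutral) (auto simp: coeff_eq_0)
    finally show ?thesis by (simp add: cheb_lead)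
  qed
  moreover have "coeff (\<Sum>k\<le>Suc N. smult (f k) (cheb k)) (Suc N) = 0"
    using Suc.prems(1) by (simp only: coeff_0)
  ultimately have fN: "f (Suc N) = 0" by simp
  then have "(\<Sum>k\<le>N. smult (f k) (cheb k)) = 0" using Suc.prems by simp
  then show ?case using Suc fN by (cases "k = Suc N") auto
qed

lemma cheb_coeffs_prop:
  "(\<forall>k>degree Q. cheb_coeffs Q k = 0) \<and> Q = (\<Sum>k\<le>degree Q. smult (cheb_coeffs Q k) (cheb k))"
proof -
  have "\<exists>!d. (\<forall>k>degree Q. d k = 0) \<and> Q = (\<Sum>k\<le>degree Q. smult (d k) (cheb k))"
  proof (rule ex_ex1I)
    show "\<exists>d. (\<forall>k>degree Q. d k = 0) \<and> Q = (\<Sum>k\<le>degree Q. smult (d k) (cheb k))"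
      by (rule cheb_exp_exists)
  next
    fix d e
    assume d: "(\<forall>k>degree Q. d k = 0) \<and> Q = (\<Sum>k\<le>degree Q. smult (d k) (cheb k))"
       and e: "(\<forall>k>degree Q. e k = 0) \<and> Q = (\<Sum>k\<le>degree Q. smult (e k) (cheb k))"
    have "(\<Sum>k\<le>degree Q. smult (d k - e k) (cheb k)) = 0"
      using d e by (simp add: smult_diff_left sum_subtractf)
    then have "\<And>k. k \<le> degree Q \<Longrightarrow> d k - e k = 0" by (rule cheb_indep)
    then show "d = e" using d e by (metis eq_iff_diff_eq_0 not_le ext)
  qed
  then show ?thesis unfolding cheb_coeffs_def by (rule theI')
qed

lemma coeff_via_cheb:
  "coeff Q j = (\<Sum>k\<le>degree Q. cheb_coeffs Q k * coeff (cheb k) j)"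
proof -
  have "coeff Q j = coeff (\<Sum>k\<le>degree Q. smult (cheb_coeffs Q k) (cheb k)) j"
    using cheb_coeffs_prop[of Q] by metis
  then show ?thesis by (simp add: coeff_sum)
qed

lemma coeff_mult_small:
  fixes p q :: "real poly"
  shows "coeff (p * q) 0 = coeff p 0 * coeff q 0"
    "coeff (p * q) 1 = coeff p 0 * coeff q 1 + coeff p 1 * coeff q 0"
    "coeff (p * q) 2 = coeff p 0 * coeff q 2 + coeff p 1 * coeff q 1 + coeff p 2 * coeff q 0"
    "coeff (p * q) 3 = coeff p 0 * coeff q 3 + coeff p 1 * coeff q 2 + coeff p 2 * coeff q 1 + coeff p 3 * coeff q 0"
    "coeff (p * q) 4 = coeff p 0 * coeff q 4 + coeff p 1 * coeff q 3 + coeff p 2 * coeff q 2 + coeff p 3 * coeff q 1 + coeff p 4 * coeff q 0"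
  by (simp_all add: coeff_mult eval_nat_numeral)

lemma pow_head:
  fixes A :: "real poly" and a s :: real
  assumes "coeff A 0 = a" "coeff A 1 = 0" "coeff A 2 = - s * a / 4" "coeff A 3 = 0"
    "coeff A 4 = s * (s - 3) * a / 32"
  shows "coeff (A^d) 0 = a^d \<and> coeff (A^d) 1 = 0 \<and> coeff (A^d) 2 = - (real d * s) * a^d / 4
     \<and> coeff (A^d) 3 = 0 \<and> coeff (A^d) 4 = (real d * s) * (real d * s - 3) * a^d / 32"
proof (induction d)
  case 0 then show ?case by simp
next
  case (Suc d)
  then have h: "coeff (A^d) 0 = a^d" "coeff (A^d) 1 = 0" "coeff (A^d) 2 = - (real d * s) * a^d / 4"
     "coeff (A^d) 3 = 0" "coeff (A^d) 4 = (real d * s) * (real d * s - 3) * a^d / 32" by auto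
  show ?case
    by (simp only: power_Suc coeff_mult_small assms h) (simp add: of_nat_Suc; simp add: field_simps; algebra)
qed

lemma choose2: "real (k choose 2) = real k * (real k - 1) / 2"
  by (induction k) (simp_all add: numeral_2_eq_2 field_simps)
lemma choose3: "real (k choose 3) = real k * (real k - 1) * (real k - 2) / 6"
proof (induction k)
  case 0 then show ?case by simp
next
  case (Suc k)
  have "Suc k choose 3 = (k choose 2) + (k choose 3)" by (simp add: numeral_3_eq_3 numeral_2_eq_2)
  then show ?case using Suc choose2[of k] by (simp add: field_simps)
qed
lemma choose4: "real (k choose 4) = real k * (real k - 1) * (real k - 2) * (real k - 3) / 24"
proof (induction k)
  case 0 then show ?case by simp
next
  case (Suc k)
  have "Suc k choose 4 = (k choose 3) + (k choose 4)" by (simp add: eval_nat_numeral)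
  then show ?case using Suc choose3[of k] by (simp add: field_simps)
qed

lemma pcompose_monom: "pcompose (monom c k) q = smult c (q ^ k)"
  by (induction k) (simp_all add: monom_Suc pcompose_pCons monom_0)

lemma cheb_par1: "coeff (cheb (Suc k)) k = 0"
  by (rule cheb_parity) simp
lemma cheb_par3: "coeff (cheb (k+3)) k = 0"
  by (rule cheb_parity) presburger

lemma ch_rel:
  assumes dQ: "degree Q = m + 5"
  shows "coeff Q (m+5) = Ch 0 Q * 2^(m+4)"
   "coeff Q (m+4) = Ch 1 Q * 2^(m+3)"
   "coeff Q (m+3) = Ch 2 Q * 2^(m+2) - Ch 0 Q * real (m+5) * 2^(m+3) / 2"
   "coeff Q (m+2) = Ch 3 Q * 2^(m+1) - Ch 1 Q * real (m+4) * 2^(m+2) / 2"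
   "coeff Q (m+1) = Ch 4 Q * 2^m - Ch 2 Q * real (m+3) * 2^(m+1) / 2
       + Ch 0 Q * real (m+5) * real (m+2) * 2^(m+1) / 4"
proof -
  define d where "d = cheb_coeffs Q"
  define c where "c k j = coeff (cheb k) j" for k j
  have Ch: "Ch 0 Q = d (m+5)" "Ch 1 Q = d (m+4)" "Ch 2 Q = d (m+3)" "Ch 3 Q = d (m+2)" "Ch 4 Q = d (m+1)"
    by (simp_all add: Ch_def dQ d_def add.commute)
  have split: "coeff Q j = d (m+1) * c (m+1) j + d (m+2) * c (m+2) j + d (m+3) * c (m+3) j
      + d (m+4) * c (m+4) j + d (m+5) * c (m+5) j" if "j \<ge> m+1" for j
  proof -
    have "coeff Q j = (\<Sum>k\<le>m+5. d k * c k j)"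
      using coeff_via_cheb[of Q j] by (simp add: dQ d_def c_def)
    also have "\<dots> = (\<Sum>k\<le>m. d k * c k j) + d (m+1) * c (m+1) j + d (m+2) * c (m+2) j + d (m+3) * c (m+3) j
      + d (m+4) * c (m+4) j + d (m+5) * c (m+5) j"
      by (simp add: eval_nat_numeral)
    also have "(\<Sum>k\<le>m. d k * c k j) = 0"
      by (rule sum.neutral) (use that in \<open>auto simp: c_def coeff_eq_0\<close>)
    finally show ?thesis by simp
  qed
  have z: "c k j = 0" if "k < j" for k j using that by (simp add: c_def coeff_eq_0)
  have l: "c (m+1+i) (m+1+i) = 2^(m+i)" for i using cheb_lead[of "m+i"] by (simp add: c_def)
  have p1: "c (Suc (m+i)) (m+i) = 0" for i using cheb_par1 by (simp add: c_def)
  have p3: "c (m+i+3) (m+i) = 0" for i using cheb_par3 by (simp add: c_def)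
  have s2: "c (m+i+2) (m+i) = - real (m+i+2) * 2^(m+i) / 2" for i using cheb_sub2 by (simp add: c_def)
  have s4: "c (m+5) (m+1) = real (m+5) * real (m+2) * 2^(m+1) / 4"
    using cheb_sub4[of "m+1"] by (simp add: c_def add.commute add.left_commute)
  show "coeff Q (m+5) = Ch 0 Q * 2^(m+4)"
    using split[of "m+5"] z[of "m+1" "m+5"] z[of "m+2" "m+5"] z[of "m+3" "m+5"] z[of "m+4" "m+5"] l[of 4]
    unfolding Ch by (simp add: add_ac)
  show "coeff Q (m+4) = Ch 1 Q * 2^(m+3)"
    using split[of "m+4"] z[of "m+1" "m+4"] z[of "m+2" "m+4"] z[of "m+3" "m+4"] l[of 3] p1[of 4]
    unfolding Ch by (simp add: add_ac)
  have v: "c (m+1) (m+1) = 2^m" "c (m+2) (m+2) = 2^(m+1)" "c (m+3) (m+3) = 2^(m+2)"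
    "c (m+2) (m+1) = 0" "c (m+3) (m+2) = 0" "c (m+4) (m+3) = 0" "c (m+4) (m+1) = 0"
    "c (m+5) (m+2) = 0"
    "c (m+3) (m+1) = - real (m+3) * 2^(m+1) / 2"
    "c (m+4) (m+2) = - real (m+4) * 2^(m+2) / 2"
    "c (m+5) (m+3) = - real (m+5) * 2^(m+3) / 2"
    "c (m+5) (m+1) = real (m+5) * real (m+2) * 2^(m+1) / 4"
    "c (m+1) (m+2) = 0" "c (m+1) (m+3) = 0" "c (m+2) (m+3) = 0"
    using l[of 0] l[of 1] l[of 2] p1[of 1] p1[of 2] p1[of 3] p3[of 1] p3[of 2] s2[of 1] s2[of 2] s2[of 3] s4
      z[of "m+1" "m+2"] z[of "m+1" "m+3"] z[of "m+2" "m+3"]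
    by (simp_all add: add_ac eval_nat_numeral)
  have e3: "coeff Q (m+3) = d (m+1) * c (m+1) (m+3) + d (m+2) * c (m+2) (m+3) + d (m+3) * c (m+3) (m+3)
      + d (m+4) * c (m+4) (m+3) + d (m+5) * c (m+5) (m+3)" by (rule split) simp
  have e2: "coeff Q (m+2) = d (m+1) * c (m+1) (m+2) + d (m+2) * c (m+2) (m+2) + d (m+3) * c (m+3) (m+2)
      + d (m+4) * c (m+4) (m+2) + d (m+5) * c (m+5) (m+2)" by (rule split) simp
  have e1: "coeff Q (m+1) = d (m+1) * c (m+1) (m+1) + d (m+2) * c (m+2) (m+1) + d (m+3) * c (m+3) (m+1)
      + d (m+4) * c (m+4) (m+1) + d (m+5) * c (m+5) (m+1)" by (rule split) simp
  show "coeff Q (m+3) = Ch 2 Q * 2^(m+2) - Ch 0 Q * real (m+5) * 2^(m+3) / 2"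
    unfolding Ch e3 v by (simp add: field_simps)
  show "coeff Q (m+2) = Ch 3 Q * 2^(m+1) - Ch 1 Q * real (m+4) * 2^(m+2) / 2"
    unfolding Ch e2 v by (simp add: field_simps)
  show "coeff Q (m+1) = Ch 4 Q * 2^m - Ch 2 Q * real (m+3) * 2^(m+1) / 2
       + Ch 0 Q * real (m+5) * real (m+2) * 2^(m+1) / 4"
    unfolding Ch e1 v by (simp add: field_simps)
qed

lemma alg_A:
  fixes N \<alpha> \<beta> :: real
  assumes N: "N \<ge> 5"
    and E2: "2*N*(N-1)*\<beta>^2 - N + N*\<alpha>^2 = 0"
    and E3: "4*(N*(N-1)*(N-2)/6)*\<beta>^3 - N*(N-2)*\<beta> + (N-1)*N*\<alpha>^2*\<beta> = 0"
  shows "((\<alpha> = 1 \<or> \<alpha> = -1) \<and> \<beta> = 0) \<or>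
         (4 * \<beta>^2 = 6 / ((N - 1) * (2 * N - 1)) \<and> \<alpha>^2 = (2 * N - 4) / (2 * N - 1))"
proof -
  have "N*(\<alpha>^2 - (1 - 2*(N-1)*\<beta>^2)) = 0" using E2 by (simp add: algebra_simps)
  then have a2: "\<alpha>^2 = 1 - 2*(N-1)*\<beta>^2" using N by simp
  have idt: "3 * (4*(N*(N-1)*(N-2)/6)*\<beta>^3 - N*(N-2)*\<beta> + (N-1)*N*\<alpha>^2*\<beta>)
      = N*\<beta>*(3 - \<beta>^2*(N-1)*(4*N-2)) + 3*(N-1)*N*\<beta>*(\<alpha>^2 - (1 - 2*(N-1)*\<beta>^2))"
    by (simp add: field_simps power2_eq_square power3_eq_cube; algebra)
  have hz: "\<alpha>^2 - (1 - 2*(N-1)*\<beta>^2) = 0" using a2 by simp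
  have "N*\<beta>*(3 - \<beta>^2*(N-1)*(4*N-2)) = 0" using idt unfolding E3 hz by simp
  then have "\<beta> = 0 \<or> \<beta>^2*(N-1)*(4*N-2) = 3" using N by auto
  then show ?thesis
  proof
    assume b: "\<beta> = 0"
    then have "\<alpha>^2 = 1" using a2 by simp
    then have "\<alpha> = 1 \<or> \<alpha> = -1" by (simp add: power2_eq_1_iff)
    then show ?thesis using b by blast
  next
    assume b: "\<beta>^2*(N-1)*(4*N-2) = 3"
    have p: "(N-1)*(2*N-1) > 0" using N by simp
    have "4 * \<beta>^2 = 6 / ((N - 1) * (2 * N - 1))" using b p by (simp add: field_simps; simp add: algebra_simps)
    moreover have "\<alpha>^2 = (2 * N - 4) / (2 * N - 1)"
    proof -
      have e: "2*(N-1)*\<beta>^2 = 3/(2*N-1)" using b N by (simp add: field_simps; simp add: algebra_simps)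
      have "\<alpha>^2 = 1 - 3/(2*N-1)" using a2 unfolding e .
      moreover have "2*N - 1 \<noteq> 0" using N by auto
      ultimately show ?thesis by (simp add: field_simps)
    qed
    ultimately show ?thesis by blast
  qed
qed

lemma alg_B:
  fixes N \<alpha> \<beta> :: real
  assumes N: "N \<ge> 5"
    and E2: "2*N*(N-1)*\<beta>^2 - N + N*\<alpha>^2 = 0"
    and E4: "32*((N*(N-1)*(N-2)*(N-3)/24)*\<beta>^4 - (N/4)*((N-2)*(N-3)/2)*\<beta>^2 + N*(N-3)/32) = N*(N-3)*\<alpha>^4"
  shows "((\<alpha> = 1 \<or> \<alpha> = -1) \<and> \<beta> = 0) \<or>
         (4 * \<beta>^2 = 12 / ((N - 1) * (2 * N - 1)) \<and> \<alpha>^2 = (2 * N - 7) / (2 * N - 1))"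
proof -
  have "N*(\<alpha>^2 - (1 - 2*(N-1)*\<beta>^2)) = 0" using E2 by (simp add: algebra_simps)
  then have a2: "\<alpha>^2 = 1 - 2*(N-1)*\<beta>^2" using N by simp
  have a4: "\<alpha>^4 = (1 - 2*(N-1)*\<beta>^2)^2" using a2 by (metis power_mult numeral_Bit0 mult_2_right numeral_One power_mult_distrib semiring_norm(4))
  have "32*((N*(N-1)*(N-2)*(N-3)/24)*\<beta>^4 - (N/4)*((N-2)*(N-3)/2)*\<beta>^2 + N*(N-3)/32) - N*(N-3)*(1 - 2*(N-1)*\<beta>^2)^2
      = N*(N-3)*\<beta>^2*(4 - \<beta>^2*(N-1)*(8*N-4)/3)"
    by (simp add: field_simps power2_eq_square power4_eq_xxxx; algebra)
  then have "N*(N-3)*\<beta>^2*(4 - \<beta>^2*(N-1)*(8*N-4)/3) = 0" unfolding E4 a4 by simp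
  then have "\<beta> = 0 \<or> \<beta>^2*(N-1)*(8*N-4) = 12" using N by auto
  then show ?thesis
  proof
    assume b: "\<beta> = 0"
    then have "\<alpha>^2 = 1" using a2 by simp
    then have "\<alpha> = 1 \<or> \<alpha> = -1" by (simp add: power2_eq_1_iff)
    then show ?thesis using b by blast
  next
    assume b: "\<beta>^2*(N-1)*(8*N-4) = 12"
    have p: "(N-1)*(2*N-1) > 0" using N by simp
    have "4 * \<beta>^2 = 12 / ((N - 1) * (2 * N - 1))" using b p by (simp add: field_simps; simp add: algebra_simps)
    moreover have "\<alpha>^2 = (2 * N - 7) / (2 * N - 1)"
    proof -
      have e: "2*(N-1)*\<beta>^2 = 6/(2*N-1)" using b N by (simp add: field_simps; simp add: algebra_simps)
      have "\<alpha>^2 = 1 - 6/(2*N-1)" using a2 unfolding e .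
      moreover have "2*N - 1 \<noteq> 0" using N by auto
      ultimately show ?thesis by (simp add: field_simps)
    qed
    ultimately show ?thesis by blast
  qed
qed

lemma G_head:
  fixes F T :: "real poly"
  assumes dF: "degree F \<ge> 1" and dT: "degree T = s" and s5: "s \<ge> 5" and j: "j \<le> 4"
  shows "coeff (pcompose F T) (degree F * s - j) = lead_coeff F * coeff ((reflect_poly T)^(degree F)) j"
proof -
  define D where "D = degree F"
  define c where "c = lead_coeff F"
  define F' where "F' = F - monom c D"
  have "\<forall>k>D-1. coeff F' k = 0"
  proof (intro allI impI)
    fix k assume "k > D - 1"
    then have "k = D \<or> k > D" using dF D_def by linarith
    then show "coeff F' k = 0"
      by (auto simp: F'_def c_def D_def coeff_monom coeff_eq_0)
  qed
  then have dF': "degree F' \<le> D - 1" by (rule degree_le)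
  have Fs: "F = monom c D + F'" by (simp add: F'_def)
  have Gs: "pcompose F T = smult c (T^D) + pcompose F' T"
    by (subst Fs) (simp add: pcompose_add pcompose_monom)
  have T0: "T \<noteq> 0" using dT s5 by auto
  have Ds: "D * s = (D - 1) * s + s"
  proof -
    have "D = Suc (D - 1)" using dF D_def by simp
    then show ?thesis by (metis mult_Suc add.commute)
  qed
  have "degree (pcompose F' T) \<le> (D - 1) * s"
    using dF' dT by (simp add: degree_pcompose)
  then have z: "coeff (pcompose F' T) (D * s - j) = 0"
    using Ds j s5 by (intro coeff_eq_0) linarith
  have dTD: "degree (T^D) = D * s" using T0 dT by (simp add: degree_power_eq)
  have "coeff ((reflect_poly T)^D) j = coeff (T^D) (D * s - j)"
    using dTD j Ds s5 by (simp add: reflect_poly_power[symmetric] coeff_reflect_poly)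
  then show ?thesis using Gs z by (simp add: D_def c_def)
qed

lemma comp_head:
  fixes G :: "real poly"
  assumes dG: "degree G = m + 5" and g1: "coeff G (m+4) = 0" and g3: "coeff G (m+2) = 0"
    and j: "j \<ge> m + 1"
  shows "coeff (pcompose G [:\<beta>, \<alpha>:]) j = coeff G (m+5) * coeff ([:\<beta>, \<alpha>:]^(m+5)) j
     + coeff G (m+3) * coeff ([:\<beta>, \<alpha>:]^(m+3)) j + coeff G (m+1) * coeff ([:\<beta>, \<alpha>:]^(m+1)) j"
proof -
  define G' where "G' = G - (monom (coeff G (m+5)) (m+5) + monom (coeff G (m+3)) (m+3) + monom (coeff G (m+1)) (m+1))"
  have "\<forall>k>m. coeff G' k = 0"
  proof (intro allI impI)
    fix k assume "k > m"
    then have "k = m+1 \<or> k = m+2 \<or> k = m+3 \<or> k = m+4 \<or> k = m+5 \<or> k > m+5" by linarith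
    then show "coeff G' k = 0"
      using g1 g3 dG by (auto simp: G'_def coeff_monom coeff_eq_0)
  qed
  then have dG': "degree G' \<le> m" by (rule degree_le)
  have "degree (pcompose G' [:\<beta>, \<alpha>:]) \<le> degree G' * degree [:\<beta>, \<alpha>:]" by (rule degree_pcompose_le)
  also have "\<dots> \<le> m" using dG' by (simp add: mult_le_one)
  finally have z: "coeff (pcompose G' [:\<beta>, \<alpha>:]) j = 0" using j by (intro coeff_eq_0) linarith
  have "G = monom (coeff G (m+5)) (m+5) + monom (coeff G (m+3)) (m+3) + monom (coeff G (m+1)) (m+1) + G'"
    by (simp add: G'_def)
  then have "pcompose G [:\<beta>, \<alpha>:] = smult (coeff G (m+5)) ([:\<beta>, \<alpha>:]^(m+5)) + smult (coeff G (m+3)) ([:\<beta>, \<alpha>:]^(m+3))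
      + smult (coeff G (m+1)) ([:\<beta>, \<alpha>:]^(m+1)) + pcompose G' [:\<beta>, \<alpha>:]"
    by (metis pcompose_add pcompose_monom)
  then show ?thesis using z by simp
qed

lemma coeff_lin_pow:
  fixes \<alpha> \<beta> :: real
  shows "coeff ([:\<beta>, \<alpha>:]^k) i = (if i \<le> k then real (k choose i) * \<alpha>^i * \<beta>^(k-i) else 0)"
proof (cases "i \<le> k")
  case True then show ?thesis by (simp add: coeff_linear_poly_power)
next
  case False
  have "degree ([:\<beta>, \<alpha>:]^k) \<le> degree [:\<beta>, \<alpha>:] * k" by (rule degree_power_le)
  also have "\<dots> \<le> k" by (simp add: mult_le_one)
  finally show ?thesis using False by (simp add: coeff_eq_0)
qed

lemma csym: "real ((k + i) choose k) = real ((k + i) choose i)"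
  using binomial_symmetric[of k "k+i"] by simp

theorem lemma3p5:
  fixes F :: "real poly" and s :: nat and \<alpha> \<beta> :: real
  assumes "degree F \<ge> 1" and "s \<ge> 5" and "\<alpha> \<noteq> 0"
  defines "Q \<equiv> pcompose F (pcompose (cheb s) [:\<beta>, \<alpha>:])"
  defines "n \<equiv> degree Q"
  shows "(Ch 2 Q = 0 \<and> Ch 3 Q = 0 \<longrightarrow>
            ((\<alpha> = 1 \<or> \<alpha> = -1) \<and> \<beta> = 0) \<or>
            (4 * \<beta>^2 = 6 / ((real n - 1) * (2 * real n - 1)) \<and>
             \<alpha>^2 = (2 * real n - 4) / (2 * real n - 1)))
       \<and> (Ch 2 Q = 0 \<and> Ch 4 Q = 0 \<longrightarrow>
            ((\<alpha> = 1 \<or> \<alpha> = -1) \<and> \<beta> = 0) \<or>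
            (4 * \<beta>^2 = 12 / ((real n - 1) * (2 * real n - 1)) \<and>
             \<alpha>^2 = (2 * real n - 7) / (2 * real n - 1)))
       \<and> ((Ch 2 Q = 0 \<and> Ch 3 Q = 0) \<or> (Ch 2 Q = 0 \<and> Ch 4 Q = 0) \<longrightarrow>
            ((\<alpha> = 1 \<or> \<alpha> = -1) \<and> \<beta> = 0) \<or> (\<alpha>^2 < 1 \<and> \<beta> \<noteq> 0))"
proof -
  define D where "D = degree F"
  define T where "T = cheb s"
  define L where "L = [:\<beta>, \<alpha>:]"
  define G where "G = pcompose F T"
  have QG: "Q = pcompose G L" unfolding Q_def G_def T_def L_def by (simp add: pcompose_assoc)
  have dL: "degree L = 1" using assms(3) by (simp add: L_def)
  have dT: "degree T = s" by (simp add: T_def)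
  have dG: "degree G = D * s" by (simp add: G_def degree_pcompose dT D_def)
  have nDs: "n = D * s" using n_def QG dG dL by (simp add: degree_pcompose)
  have "1 * s \<le> D * s" using assms(1) D_def by (intro mult_le_mono1) simp
  then have n5: "n \<ge> 5" using assms(2) nDs by linarith
  obtain m where m: "n = m + 5" using n5 by (metis le_add_diff_inverse2)
  obtain t where t: "s = t + 5" using assms(2) by (metis le_add_diff_inverse2)
  define A where "A = reflect_poly T"
  have Acoef: "coeff A j = coeff (cheb (t+5)) (t + 5 - j)" if "j \<le> 5" for j
    using that dT t by (simp add: A_def coeff_reflect_poly T_def)
  define a :: real where "a = 2^(t+4)"
  have A0: "coeff A 0 = a" using Acoef[of 0] cheb_lead[of "t+4"] by (simp add: a_def add_ac)
  have A1: "coeff A 1 = 0" using Acoef[of 1] cheb_par1[of "t+4"] by (simp add: add_ac)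
  have A2: "coeff A 2 = - real s * a / 4" using Acoef[of 2] cheb_sub2[of "t+3"] t
    by (simp add: a_def power_add eval_nat_numeral add_ac)
  have A3: "coeff A 3 = 0" using Acoef[of 3] cheb_par3[of "t+2"] by (simp add: eval_nat_numeral add_ac)
  have A4: "coeff A 4 = real s * (real s - 3) * a / 32" using Acoef[of 4] cheb_sub4[of "t+1"] t
    by (simp add: a_def power_add eval_nat_numeral add_ac)
  note PH = pow_head[OF A0 A1 A2 A3 A4, of D]
  define c where "c = lead_coeff F"
  define g0 where "g0 = c * a^D"
  define N where "N = real n"
  have DsN: "real D * real s = N" using nDs N_def by simp
  have Gh: "coeff G (n - j) = c * coeff (A^D) j" if "j \<le> 4" for j
    using G_head[OF assms(1) dT assms(2) that] nDs by (simp add: G_def A_def c_def D_def)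
  have gv: "coeff G (m+5) = g0" "coeff G (m+4) = 0" "coeff G (m+3) = - N * g0 / 4"
     "coeff G (m+2) = 0" "coeff G (m+1) = N * (N - 3) * g0 / 32"
    using Gh[of 0] Gh[of 1] Gh[of 2] Gh[of 3] Gh[of 4] PH m DsN by (simp_all add: g0_def add_ac)
  have dGm: "degree G = m+5" using dG nDs m by simp
  have Qc: "coeff Q j = g0 * coeff (L^(m+5)) j + (- N * g0 / 4) * coeff (L^(m+3)) j
      + (N * (N - 3) * g0 / 32) * coeff (L^(m+1)) j" if "j \<ge> m+1" for j
    using comp_head[OF dGm gv(2) gv(4) that, of \<beta> \<alpha>] gv QG L_def by simp
  have Nm: "N = real m + 5" using N_def m by simp
  have b1: "real ((m+5) choose (m+4)) = real m + 5" using csym[of "m+4" 1] by (simp add: add_ac)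
  have b2: "real ((m+5) choose (m+3)) = (real m + 5) * (real m + 5 - 1) / 2"
    using csym[of "m+3" 2] choose2[of "m+5"] by (simp add: add_ac)
  have b3: "real ((m+5) choose (m+2)) = (real m + 5) * (real m + 5 - 1) * (real m + 5 - 2) / 6"
    using csym[of "m+2" 3] choose3[of "m+5"] by (simp add: add_ac)
  have b4: "real ((m+5) choose (m+1)) = (real m + 5) * (real m + 5 - 1) * (real m + 5 - 2) * (real m + 5 - 3) / 24"
    using csym[of "m+1" 4] choose4[of "m+5"] by (simp add: add_ac)
  have b5: "real ((m+3) choose (m+2)) = real m + 3" using binomial_symmetric[of "m+2" "m+3"] by simp
  have b6: "real ((m+3) choose (m+1)) = (real m + 3) * (real m + 3 - 1) / 2"
  proof -
    have e: "(m+3) choose (m+1) = (m+3) choose 2" using binomial_symmetric[of "m+1" "m+3"] by simp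
    show ?thesis unfolding e choose2 by simp
  qed
  define X where "X = \<alpha>^(m+1)"
  have pw: "\<alpha>^(m+5) = X * \<alpha>^4" "\<alpha>^(m+4) = X * \<alpha>^3" "\<alpha>^(m+3) = X * \<alpha>^2" "\<alpha>^(m+2) = X * \<alpha>"
    unfolding X_def power_add[symmetric] by (simp_all add: eval_nat_numeral)
  have q0: "coeff Q (m+5) = g0 * X * \<alpha>^4"
    using Qc[of "m+5"] unfolding L_def coeff_lin_pow by (simp add: pw)
  have q1: "coeff Q (m+4) = g0 * X * \<alpha>^3 * N * \<beta>"
    using Qc[of "m+4"] unfolding L_def coeff_lin_pow by (simp add: pw b1 Nm)
  have q2: "coeff Q (m+3) = g0 * X * \<alpha>^2 * (N*(N-1)/2 * \<beta>^2 - N/4)"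
    using Qc[of "m+3"] unfolding L_def coeff_lin_pow by (simp add: pw b2 Nm; simp add: field_simps; algebra)
  have q3: "coeff Q (m+2) = g0 * X * \<alpha> * (N*(N-1)*(N-2)/6*\<beta>^3 - N/4*(N-2)*\<beta>)"
    using Qc[of "m+2"] unfolding L_def coeff_lin_pow b3 b5 pw by (simp add: Nm; simp add: field_simps; algebra)
  have q4: "coeff Q (m+1) = g0 * X * (N*(N-1)*(N-2)*(N-3)/24*\<beta>^4 - N/4*((N-2)*(N-3)/2)*\<beta>^2 + N*(N-3)/32)"
    using Qc[of "m+1"] unfolding L_def coeff_lin_pow b4 b6 X_def[symmetric] by (simp add: Nm; simp add: field_simps; algebra)
  have dQ: "degree Q = m+5" using n_def m by simp
  note CR = ch_rel[OF dQ]
  have F0: "F \<noteq> 0" using assms(1) by auto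
  have c0: "c \<noteq> 0" using F0 by (simp add: c_def)
  have P0: "g0 * X \<noteq> 0" using c0 assms(3) by (simp add: g0_def a_def X_def)
  have N5: "N \<ge> 5" using N_def n5 by simp
  have E2: "2*N*(N-1)*\<beta>^2 - N + N*\<alpha>^2 = 0" if h: "Ch 2 Q = 0"
  proof -
    have "4 * coeff Q (m+3) + N * coeff Q (m+5) = 0"
      using CR(1) CR(3) h Nm by (simp add: power_add algebra_simps)
    moreover have "4 * (g0 * X * \<alpha>^2 * (N*(N-1)/2 * \<beta>^2 - N/4)) + N * (g0 * X * \<alpha>^4)
        = (g0 * X * \<alpha>^2) * (2*N*(N-1)*\<beta>^2 - N + N*\<alpha>^2)"
      by (simp add: field_simps; algebra)
    ultimately have "(g0 * X * \<alpha>^2) * (2*N*(N-1)*\<beta>^2 - N + N*\<alpha>^2) = 0" unfolding q2 q0 by simp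
    then show ?thesis using P0 assms(3) by simp
  qed
  have E3: "4*(N*(N-1)*(N-2)/6)*\<beta>^3 - N*(N-2)*\<beta> + (N-1)*N*\<alpha>^2*\<beta> = 0" if h: "Ch 3 Q = 0"
  proof -
    have "4 * coeff Q (m+2) + (N - 1) * coeff Q (m+4) = 0"
      using CR(2) CR(4) h Nm by (simp add: power_add algebra_simps)
    moreover have "4 * (g0 * X * \<alpha> * (N*(N-1)*(N-2)/6*\<beta>^3 - N/4*(N-2)*\<beta>)) + (N - 1) * (g0 * X * \<alpha>^3 * N * \<beta>)
        = (g0 * X * \<alpha>) * (4*(N*(N-1)*(N-2)/6)*\<beta>^3 - N*(N-2)*\<beta> + (N-1)*N*\<alpha>^2*\<beta>)"
      by (simp add: field_simps; algebra)
    ultimately have "(g0 * X * \<alpha>) * (4*(N*(N-1)*(N-2)/6)*\<beta>^3 - N*(N-2)*\<beta> + (N-1)*N*\<alpha>^2*\<beta>) = 0"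
      unfolding q3 q1 by simp
    then show ?thesis using P0 assms(3) by simp
  qed
  have E4: "32*((N*(N-1)*(N-2)*(N-3)/24)*\<beta>^4 - (N/4)*((N-2)*(N-3)/2)*\<beta>^2 + N*(N-3)/32) = N*(N-3)*\<alpha>^4"
    if h2: "Ch 2 Q = 0" and h4: "Ch 4 Q = 0"
  proof -
    have "32 * coeff Q (m+1) = N * (N - 3) * coeff Q (m+5)"
      using CR(1) CR(5) h2 h4 Nm by (simp add: power_add algebra_simps)
    then have "(g0 * X) * (32*((N*(N-1)*(N-2)*(N-3)/24)*\<beta>^4 - (N/4)*((N-2)*(N-3)/2)*\<beta>^2 + N*(N-3)/32))
        = (g0 * X) * (N*(N-3)*\<alpha>^4)"
      unfolding q4 q0 by (simp add: algebra_simps)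
    then show ?thesis using P0 by simp
  qed
  have R1: "Ch 2 Q = 0 \<and> Ch 3 Q = 0 \<longrightarrow>
            ((\<alpha> = 1 \<or> \<alpha> = -1) \<and> \<beta> = 0) \<or>
            (4 * \<beta>^2 = 6 / ((real n - 1) * (2 * real n - 1)) \<and>
             \<alpha>^2 = (2 * real n - 4) / (2 * real n - 1))"
    using alg_A[OF N5 E2 E3] N_def by blast
  have R2: "Ch 2 Q = 0 \<and> Ch 4 Q = 0 \<longrightarrow>
            ((\<alpha> = 1 \<or> \<alpha> = -1) \<and> \<beta> = 0) \<or>
            (4 * \<beta>^2 = 12 / ((real n - 1) * (2 * real n - 1)) \<and>
             \<alpha>^2 = (2 * real n - 7) / (2 * real n - 1))"
    using alg_B[OF N5 E2 E4] N_def by blast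
  have pos: "(N - 1) * (2 * N - 1) > 0" "2 * N - 1 > 0" using N5 by auto
  have R3: "((Ch 2 Q = 0 \<and> Ch 3 Q = 0) \<or> (Ch 2 Q = 0 \<and> Ch 4 Q = 0) \<longrightarrow>
            ((\<alpha> = 1 \<or> \<alpha> = -1) \<and> \<beta> = 0) \<or> (\<alpha>^2 < 1 \<and> \<beta> \<noteq> 0))"
  proof
    assume "(Ch 2 Q = 0 \<and> Ch 3 Q = 0) \<or> (Ch 2 Q = 0 \<and> Ch 4 Q = 0)"
    then have "((\<alpha> = 1 \<or> \<alpha> = -1) \<and> \<beta> = 0) \<or>
        (4 * \<beta>^2 = 6 / ((N - 1) * (2 * N - 1)) \<and> \<alpha>^2 = (2 * N - 4) / (2 * N - 1)) \<or>
        (4 * \<beta>^2 = 12 / ((N - 1) * (2 * N - 1)) \<and> \<alpha>^2 = (2 * N - 7) / (2 * N - 1))"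
      using R1 R2 N_def by blast
    then show "((\<alpha> = 1 \<or> \<alpha> = -1) \<and> \<beta> = 0) \<or> (\<alpha>^2 < 1 \<and> \<beta> \<noteq> 0)"
    proof (elim disjE conjE)
      assume b: "4 * \<beta>^2 = 6 / ((N - 1) * (2 * N - 1))" and a: "\<alpha>^2 = (2 * N - 4) / (2 * N - 1)"
      have "\<beta> \<noteq> 0" using b pos by auto
      moreover have "\<alpha>^2 < 1" using a pos by (simp add: divide_less_eq)
      ultimately show ?thesis by blast
    next
      assume b: "4 * \<beta>^2 = 12 / ((N - 1) * (2 * N - 1))" and a: "\<alpha>^2 = (2 * N - 7) / (2 * N - 1)"
      have "\<beta> \<noteq> 0" using b pos by auto
      moreover have "\<alpha>^2 < 1" using a pos by (simp add: divide_less_eq)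
      ultimately show ?thesis by blast
    qed auto
  qed
  show ?thesis using R1 R2 R3 by blast
qed

end
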